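(* Let $T$ be a finite set of triples and $Q$ a finite nonempty set of queries. For each $q \in Q$ let $T_q \subseteq T$ be nonempty and $f_q(t) = \mathbb{I}[t\in T_q]$. Define $c_t = \sum_{q\in Q} f_q(t)$, $\mathrm{cost}(G,Q) = \sum_{t\in T} c_t$, the sensitivity $s(t) = \sum_{q\in Q}\frac{1}{|T_q|}\mathbb{I}[t\in T_q]$, $S = \sum_{t\in T} s(t)$, and the sampling probability $p(t) = s(t)/S$. Let $m\ge 1$, draw $m$ triples independently from $T$ according to $p$, let $X_t$ be the number of times $t$ is drawn, and let $w(t) = \frac{1}{m\,p(t)}$ for triples with $p(t)>0$. Define $\mathrm{cost}(C,Q) = \sum_{t \in T:\, X_t>0} X_t\, w(t)\, c_t$. Then \begin{enumerate} \item $\mathbb{E}[\mathrm{cost}(C,Q)] = \mathrm{cost}(G,Q)$; \item $\operatorname{Var}[\mathrm{cost}(C,Q)] \leq \frac{|Q|}{m}\,\mathrm{cost}(G,Q)^2$. \end{enumerate}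
   Context: $T$ is the triple set of a knowledge graph $G$, $Q$ a user-specific query workload, and $T_q$ the set of triples relevant to query $q$. Triples with $s(t)=0$ (equivalently $c_t = 0$) are never sampled. Thus $X_t \sim \mathrm{Binomial}(m,p(t))$. *)

theory Defs
  imports "HOL-Probability.Probability"
begin

definition f_q :: "('q \<Rightarrow> 'a set) \<Rightarrow> 'q \<Rightarrow> 'a \<Rightarrow> real" where
  "f_q Tq q t = (if t \<in> Tq q then 1 else 0)"

definition c_t :: "'q set \<Rightarrow> ('q \<Rightarrow> 'a set) \<Rightarrow> 'a \<Rightarrow> real" where
  "c_t Q Tq t = (\<Sum>q\<in>Q. f_q Tq q t)"

definition cost_G :: "'a set \<Rightarrow> 'q set \<Rightarrow> ('q \<Rightarrow> 'a set) \<Rightarrow> real" where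
  "cost_G T Q Tq = (\<Sum>t\<in>T. c_t Q Tq t)"

definition sens :: "'q set \<Rightarrow> ('q \<Rightarrow> 'a set) \<Rightarrow> 'a \<Rightarrow> real" where
  "sens Q Tq t = (\<Sum>q\<in>Q. (1 / real (card (Tq q))) * f_q Tq q t)"

definition total_sens :: "'a set \<Rightarrow> 'q set \<Rightarrow> ('q \<Rightarrow> 'a set) \<Rightarrow> real" where
  "total_sens T Q Tq = (\<Sum>t\<in>T. sens Q Tq t)"

definition samp_prob :: "'a set \<Rightarrow> 'q set \<Rightarrow> ('q \<Rightarrow> 'a set) \<Rightarrow> 'a \<Rightarrow> real" where
  "samp_prob T Q Tq t = sens Q Tq t / total_sens T Q Tq"

text \<open>X_t: number of times t is drawn in the sample (a list of m draws).\<close>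
definition draw_count :: "'a list \<Rightarrow> 'a \<Rightarrow> nat" where
  "draw_count xs t = count_list xs t"

definition weight :: "'a set \<Rightarrow> 'q set \<Rightarrow> ('q \<Rightarrow> 'a set) \<Rightarrow> nat \<Rightarrow> 'a \<Rightarrow> real" where
  "weight T Q Tq m t = 1 / (real m * samp_prob T Q Tq t)"

definition cost_C :: "'a set \<Rightarrow> 'q set \<Rightarrow> ('q \<Rightarrow> 'a set) \<Rightarrow> nat \<Rightarrow> 'a list \<Rightarrow> real" where
  "cost_C T Q Tq m xs =
     (\<Sum>t\<in>{t\<in>T. draw_count xs t > 0}.
        real (draw_count xs t) * weight T Q Tq m t * c_t Q Tq t)"

end

theory Submission imports Defs begin

lemma rep_fin: "finite (set_pmf D) \<Longrightarrow> finite (set_pmf (replicate_pmf n D))"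
  unfolding set_replicate_pmf lists_eq_set
  using finite_lists_length_eq by auto

lemma rep_Suc_exp:
  fixes g :: "'a list \<Rightarrow> real"
  assumes "finite (set_pmf D)"
  shows "measure_pmf.expectation (replicate_pmf (Suc n) D) g =
    (\<Sum>x\<in>set_pmf D. pmf D x * measure_pmf.expectation (replicate_pmf n D) (\<lambda>xs. g (x#xs)))"
proof -
  have "replicate_pmf (Suc n) D = D \<bind> (\<lambda>x. map_pmf (Cons x) (replicate_pmf n D))"
    by (simp add: map_pmf_def)
  then have "measure_pmf.expectation (replicate_pmf (Suc n) D) g =
     measure_pmf.expectation (D \<bind> (\<lambda>x. map_pmf (Cons x) (replicate_pmf n D))) g" by simp
  also have "\<dots> = (\<Sum>x\<in>set_pmf D. pmf D x *\<^sub>R measure_pmf.expectation (map_pmf (Cons x) (replicate_pmf n D)) g)"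
    using assms rep_fin[OF assms] by (intro pmf_expectation_bind) auto
  finally show ?thesis by simp
qed

lemma E1:
  fixes h :: "'a \<Rightarrow> real"
  assumes fin: "finite (set_pmf D)"
  shows "measure_pmf.expectation (replicate_pmf n D) (\<lambda>xs. sum_list (map h xs))
     = real n * (\<Sum>x\<in>set_pmf D. pmf D x * h x)"
proof (induction n)
  case 0
  then show ?case by simp
next
  case (Suc n)
  let ?a = "\<Sum>x\<in>set_pmf D. pmf D x * h x"
  have int: "integrable (measure_pmf (replicate_pmf n D)) f" for f :: "'a list \<Rightarrow> real"
    by (rule integrable_measure_pmf_finite[OF rep_fin[OF fin]])
  have "measure_pmf.expectation (replicate_pmf (Suc n) D) (\<lambda>xs. sum_list (map h xs))
     = (\<Sum>x\<in>set_pmf D. pmf D x * (h x + real n * ?a))"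
    apply (subst rep_Suc_exp[OF fin])
    apply (rule sum.cong[OF refl])
    apply (simp add: Bochner_Integration.integral_add[OF int int] Suc)
    done
  also have "\<dots> = (\<Sum>x\<in>set_pmf D. pmf D x * h x + (real n * ?a) * pmf D x)"
    by (rule sum.cong) (auto simp: algebra_simps)
  also have "\<dots> = ?a + real n * ?a * (\<Sum>x\<in>set_pmf D. pmf D x)"
    by (simp only: sum.distrib sum_distrib_left)
  also have "\<dots> = real (Suc n) * ?a"
    using sum_pmf_eq_1[OF fin order_refl] by (simp add: algebra_simps)
  finally show ?case .
qed

lemma E2:
  fixes h :: "'a \<Rightarrow> real"
  assumes fin: "finite (set_pmf D)"
  shows "measure_pmf.expectation (replicate_pmf n D) (\<lambda>xs. (sum_list (map h xs))\<^sup>2)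
     = real n * (\<Sum>x\<in>set_pmf D. pmf D x * (h x)\<^sup>2)
       + real n * (real n - 1) * (\<Sum>x\<in>set_pmf D. pmf D x * h x)\<^sup>2"
proof (induction n)
  case 0
  then show ?case by simp
next
  case (Suc n)
  let ?a = "\<Sum>x\<in>set_pmf D. pmf D x * h x"
  let ?b = "\<Sum>x\<in>set_pmf D. pmf D x * (h x)\<^sup>2"
  have int: "integrable (measure_pmf (replicate_pmf n D)) f" for f :: "'a list \<Rightarrow> real"
    by (rule integrable_measure_pmf_finite[OF rep_fin[OF fin]])
  have e1: "measure_pmf.expectation (replicate_pmf n D) (\<lambda>xs. sum_list (map h xs)) = real n * ?a"
    by (rule E1[OF fin])
  have "measure_pmf.expectation (replicate_pmf (Suc n) D) (\<lambda>xs. (sum_list (map h xs))\<^sup>2)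
     = (\<Sum>x\<in>set_pmf D. pmf D x * ((h x)\<^sup>2 + 2 * h x * (real n * ?a) + (real n * ?b + real n * (real n - 1) * ?a\<^sup>2)))"
  proof (subst rep_Suc_exp[OF fin], rule sum.cong[OF refl])
    fix x
    have "(\<lambda>xs. (sum_list (map h (x#xs)))\<^sup>2) = (\<lambda>xs. ((h x)\<^sup>2 + 2 * h x * sum_list (map h xs)) + (sum_list (map h xs))\<^sup>2)"
      by (auto simp: power2_sum)
    then show "pmf D x * measure_pmf.expectation (replicate_pmf n D) (\<lambda>xs. (sum_list (map h (x#xs)))\<^sup>2) =
       pmf D x * ((h x)\<^sup>2 + 2 * h x * (real n * ?a) + (real n * ?b + real n * (real n - 1) * ?a\<^sup>2))"
      by (simp add: Bochner_Integration.integral_add[OF int int] e1 Suc)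
  qed
  also have "\<dots> = (\<Sum>x\<in>set_pmf D. pmf D x * (h x)\<^sup>2 + (2 * real n * ?a) * (pmf D x * h x) + (real n * ?b + real n * (real n - 1) * ?a\<^sup>2) * pmf D x)"
    by (rule sum.cong) (auto simp: algebra_simps)
  also have "\<dots> = ?b + 2 * (real n) * ?a * ?a + (real n * ?b + real n * (real n - 1) * ?a\<^sup>2) * (\<Sum>x\<in>set_pmf D. pmf D x)"
    by (simp only: sum.distrib sum_distrib_left)
  also have "\<dots> = real (Suc n) * ?b + real (Suc n) * (real (Suc n) - 1) * ?a\<^sup>2"
    using sum_pmf_eq_1[OF fin order_refl] by (simp add: algebra_simps power2_eq_square)
  finally show ?case .
qed

lemma cost_C_eq:
  assumes "finite T"
  shows "cost_C T Q Tq m xs = sum_list (map (\<lambda>t. if t \<in> T then weight T Q Tq m t * c_t Q Tq t else 0) xs)"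
proof -
  let ?g = "\<lambda>t. weight T Q Tq m t * c_t Q Tq t"
  have "cost_C T Q Tq m xs = (\<Sum>t\<in>T. real (count_list xs t) * ?g t)"
    unfolding cost_C_def draw_count_def mult.assoc
    by (rule sum.mono_neutral_left) (use assms in auto)
  also have "\<dots> = sum_list (map (\<lambda>t. if t \<in> T then ?g t else 0) xs)"
  proof (induction xs)
    case Nil
    then show ?case by simp
  next
    case (Cons x xs)
    have "(\<Sum>t\<in>T. real (count_list (x#xs) t) * ?g t) =
          (\<Sum>t\<in>T. (if x = t then ?g t else 0)) + (\<Sum>t\<in>T. real (count_list xs t) * ?g t)"
      unfolding sum.distrib[symmetric] by (rule sum.cong) (auto simp: algebra_simps)
    also have "(\<Sum>t\<in>T. (if x = t then ?g t else 0)) = (if x \<in> T then ?g x else 0)"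
      using assms by (simp add: sum.delta)
    finally show ?case using Cons by simp
  qed
  finally show ?thesis .
qed

theorem mainTheorem3:
  fixes T :: "'a set" and Q :: "'q set" and Tq :: "'q \<Rightarrow> 'a set"
    and m :: nat and D :: "'a pmf"
  assumes "finite T" and "finite Q" and "Q \<noteq> {}"
    and "\<And>q. q \<in> Q \<Longrightarrow> Tq q \<subseteq> T \<and> Tq q \<noteq> {}"
    and "m \<ge> 1"
    and "\<And>t. pmf D t = (if t \<in> T then samp_prob T Q Tq t else 0)"
  shows "measure_pmf.expectation (replicate_pmf m D) (cost_C T Q Tq m) = cost_G T Q Tq \<and>
         measure_pmf.variance (replicate_pmf m D) (cost_C T Q Tq m)
           \<le> real (card Q) / real m * (cost_G T Q Tq)\<^sup>2"
proof -
  note finT = assms(1) and finQ = assms(2) and QT = assms(4) and pmfD = assms(6)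
  define G where "G = cost_G T Q Tq"
  define c where "c = c_t Q Tq"
  define s where "s = sens Q Tq"
  define h where "h = (\<lambda>t. if t \<in> T then weight T Q Tq m t * c_t Q Tq t else 0)"
  have m0: "real m > 0" using assms(5) by simp
  have setD: "set_pmf D \<subseteq> T"
    using pmfD by (auto simp: set_pmf_iff split: if_splits)
  have finD: "finite (set_pmf D)" using setD finT finite_subset by blast
  have cardpos: "card (Tq q) > 0" if "q \<in> Q" for q
    using QT[OF that] finT by (meson card_gt_0_iff finite_subset)
  have sumf: "(\<Sum>t\<in>T. f_q Tq q t) = real (card (Tq q))" if "q \<in> Q" for q
  proof -
    have "(\<Sum>t\<in>T. f_q Tq q t) = (\<Sum>t\<in>T. of_bool (t \<in> Tq q))"
      by (simp add: f_q_def of_bool_def)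
    also have "\<dots> = real (card (T \<inter> Tq q))"
      using finT by (simp add: sum.If_cases)
    also have "T \<inter> Tq q = Tq q" using QT[OF that] by blast
    finally show ?thesis .
  qed
  have G_eq: "G = (\<Sum>q\<in>Q. real (card (Tq q)))"
    unfolding G_def cost_G_def c_t_def
    by (subst sum.swap) (simp add: sumf)
  have cardG: "real (card (Tq q)) \<le> G" if "q \<in> Q" for q
    unfolding G_eq by (rule member_le_sum) (use that finQ in auto)
  have S_eq: "total_sens T Q Tq = real (card Q)"
  proof -
    have "total_sens T Q Tq = (\<Sum>q\<in>Q. (1 / real (card (Tq q))) * (\<Sum>t\<in>T. f_q Tq q t))"
      unfolding total_sens_def sens_def
      by (subst sum.swap) (simp add: sum_distrib_left)
    also have "\<dots> = (\<Sum>q\<in>Q. 1)"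
      by (rule sum.cong) (auto simp: sumf cardpos)
    finally show ?thesis by simp
  qed
  have Spos: "real (card Q) > 0" using finQ assms(3) by (simp add: card_gt_0_iff)
  have f01: "f_q Tq q t = 0 \<or> f_q Tq q t = 1" for q t by (simp add: f_q_def)
  have c_nonneg: "c t \<ge> 0" for t
    unfolding c_def c_t_def by (rule sum_nonneg) (simp add: f_q_def)
  have s_nonneg: "s t \<ge> 0" for t
    unfolding s_def sens_def by (rule sum_nonneg) (simp add: f_q_def)
  have c_le: "c t \<le> G * s t" for t
  proof -
    have "c t = (\<Sum>q\<in>Q. f_q Tq q t)" by (simp add: c_def c_t_def)
    also have "\<dots> \<le> (\<Sum>q\<in>Q. G * ((1 / real (card (Tq q))) * f_q Tq q t))"
    proof (rule sum_mono)
      fix q assume q: "q \<in> Q"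
      have cp: "real (card (Tq q)) > 0" using cardpos[OF q] by simp
      have "1 \<le> G / real (card (Tq q))" using cardG[OF q] cp by (simp add: field_simps)
      then show "f_q Tq q t \<le> G * ((1 / real (card (Tq q))) * f_q Tq q t)"
        using f01[of q t] by auto
    qed
    also have "\<dots> = G * s t" by (simp add: s_def sens_def sum_distrib_left)
    finally show ?thesis .
  qed
  have G_nonneg: "G \<ge> 0" unfolding G_eq by (rule sum_nonneg) simp
  have key1: "pmf D t * h t = c t / real m" if "t \<in> T" for t
  proof (cases "c t = 0")
    case True then show ?thesis using that by (simp add: h_def c_def)
  next
    case False
    then have "c t > 0" using c_nonneg[of t] by simp
    then have "s t > 0" using c_le[of t] G_nonneg s_nonneg[of t]
      by (metis mult_eq_0_iff order_le_less not_le order_less_le_trans)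
    then have pp: "samp_prob T Q Tq t > 0"
      using Spos by (simp add: samp_prob_def S_eq s_def)
    show ?thesis using that pp m0
      by (simp add: pmfD h_def weight_def c_def field_simps)
  qed
  have key2: "pmf D t * (h t)\<^sup>2 \<le> real (card Q) * c t * G / (real m)\<^sup>2" if "t \<in> T" for t
  proof (cases "c t = 0")
    case True then show ?thesis using that by (simp add: h_def c_def)
  next
    case False
    then have cpos: "c t > 0" using c_nonneg[of t] by simp
    then have spos: "s t > 0" using c_le[of t] G_nonneg s_nonneg[of t]
      by (metis mult_eq_0_iff order_le_less not_le order_less_le_trans)
    have p_eq: "samp_prob T Q Tq t = s t / real (card Q)"
      by (simp add: samp_prob_def S_eq s_def)
    have "pmf D t * (h t)\<^sup>2 = real (card Q) * c t * (c t / s t) / (real m)\<^sup>2"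
      using that spos Spos m0
      by (simp add: pmfD h_def weight_def p_eq c_def[symmetric] field_simps power2_eq_square)
    also have "\<dots> \<le> real (card Q) * c t * G / (real m)\<^sup>2"
    proof -
      have "c t / s t \<le> G" using c_le[of t] spos by (simp add: field_simps)
      then show ?thesis using Spos cpos m0
        by (intro divide_right_mono mult_left_mono) auto
    qed
    finally show ?thesis .
  qed
  define a where "a = (\<Sum>x\<in>set_pmf D. pmf D x * h x)"
  define b where "b = (\<Sum>x\<in>set_pmf D. pmf D x * (h x)\<^sup>2)"
  have sumT: "(\<Sum>x\<in>set_pmf D. pmf D x * k x) = (\<Sum>x\<in>T. pmf D x * k x)" for k :: "'a \<Rightarrow> real"
    by (rule sum.mono_neutral_left) (use finT setD in \<open>auto simp: set_pmf_iff\<close>)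
  have a_eq: "a = G / real m"
  proof -
    have "a = (\<Sum>x\<in>T. c x / real m)" unfolding a_def sumT by (rule sum.cong) (auto simp: key1)
    also have "\<dots> = G / real m" by (simp add: G_def cost_G_def c_def sum_divide_distrib)
    finally show ?thesis .
  qed
  have b_le: "b \<le> real (card Q) * G * G / (real m)\<^sup>2"
  proof -
    have "b \<le> (\<Sum>x\<in>T. real (card Q) * c x * G / (real m)\<^sup>2)"
      unfolding b_def sumT by (rule sum_mono) (rule key2)
    also have "\<dots> = real (card Q) * G * G / (real m)\<^sup>2"
      by (simp add: G_def cost_G_def c_def sum_divide_distrib[symmetric] sum_distrib_left[symmetric]
          sum_distrib_right[symmetric] algebra_simps)
    finally show ?thesis .
  qed
  have CC: "cost_C T Q Tq m = (\<lambda>xs. sum_list (map h xs))"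
    by (rule ext) (simp add: h_def cost_C_eq[OF finT])
  have E: "measure_pmf.expectation (replicate_pmf m D) (cost_C T Q Tq m) = G"
    unfolding CC E1[OF finD] a_def[symmetric] a_eq using m0 by simp
  have int: "integrable (measure_pmf (replicate_pmf m D)) f" for f :: "'a list \<Rightarrow> real"
    by (rule integrable_measure_pmf_finite[OF rep_fin[OF finD]])
  have "measure_pmf.variance (replicate_pmf m D) (cost_C T Q Tq m)
      = real m * b + real m * (real m - 1) * a\<^sup>2 - G\<^sup>2"
    apply (subst measure_pmf.variance_eq[OF int int])
    unfolding E
    unfolding CC E2[OF finD] a_def[symmetric] b_def[symmetric] by simp
  also have "\<dots> = real m * b - real m * a\<^sup>2"
    unfolding a_eq using m0 by (simp add: field_simps power2_eq_square)
  also have "\<dots> \<le> real m * b" by simp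
  also have "\<dots> \<le> real m * (real (card Q) * G * G / (real m)\<^sup>2)"
    using b_le m0 by (intro mult_left_mono) auto
  also have "\<dots> = real (card Q) / real m * G\<^sup>2"
    using m0 by (simp add: field_simps power2_eq_square)
  finally show ?thesis using E by (simp add: G_def)
qed

end
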